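(* For $n\ge1$ let $S_n$ be the set of binary sequences of length $n$ in which no maximal run of zeros has length congruent to $1\bmod 3$, and let $c_n=|S_n|$. Then $c_n=c_{n-1}+2c_{n-3}$ for $n\ge4$, with $c_1=1$, $c_2=2$, $c_3=4$.
   Context: A "run of zeros" means a maximal block of consecutive zeros; e.g. $00000\in S_5$ since its only run of zeros has length $5\equiv 2\pmod 3$. *)

theory Defs
  imports Main
begin

definition max_zero_run :: "nat list \<Rightarrow> nat \<Rightarrow> nat \<Rightarrow> bool" where
  "max_zero_run xs i j \<longleftrightarrow>
     i < j \<and> j \<le> length xs \<and> (\<forall>k. i \<le> k \<and> k < j \<longrightarrow> xs ! k = 0) \<and>
     (i = 0 \<or> xs ! (i - 1) \<noteq> 0) \<and> (j = length xs \<or> xs ! j \<noteq> 0)"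

definition S :: "nat \<Rightarrow> nat list set" where
  "S n = {xs. length xs = n \<and> set xs \<subseteq> {0, 1} \<and>
             (\<forall>i j. max_zero_run xs i j \<longrightarrow> (j - i) mod 3 \<noteq> 1)}"

definition c :: "nat \<Rightarrow> nat" where
  "c n = card (S n)"

end

theory Submission
  imports Defs
begin

definition good :: "nat list \<Rightarrow> bool" where
  "good xs \<longleftrightarrow> (\<forall>i j. max_zero_run xs i j \<longrightarrow> (j - i) mod 3 \<noteq> 1)"

definition inner :: "nat list \<Rightarrow> bool" where
  "inner xs \<longleftrightarrow> (\<forall>i j. max_zero_run xs i j \<and> j < length xs \<longrightarrow> (j - i) mod 3 \<noteq> 1)"

definition fin :: "nat list \<Rightarrow> bool" where
  "fin xs \<longleftrightarrow> (\<forall>i. max_zero_run xs i (length xs) \<longrightarrow> (length xs - i) mod 3 \<noteq> 1)"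

lemma good_split: "good xs \<longleftrightarrow> inner xs \<and> fin xs"
proof -
  have "max_zero_run xs i j \<Longrightarrow> j \<le> length xs" for i j
    unfolding max_zero_run_def by simp
  then show ?thesis unfolding good_def inner_def fin_def
    by (metis le_neq_implies_less)
qed

lemma nth_app_lt: "k < length ys \<Longrightarrow> (ys @ zs) ! k = ys ! k"
  by (simp add: nth_append)

lemma mzr_app_lt:
  assumes "j < length ys"
  shows "max_zero_run (ys @ zs) i j \<longleftrightarrow> max_zero_run ys i j"
  using assms unfolding max_zero_run_def by (auto simp: nth_append)

lemma mzr_app_eq:
  assumes "zs \<noteq> []" "hd zs \<noteq> 0"
  shows "max_zero_run (ys @ zs) i (length ys) \<longleftrightarrow> max_zero_run ys i (length ys)"
  using assms unfolding max_zero_run_def by (auto simp: nth_append hd_conv_nth)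

lemma inner0: "inner (ys @ [0]) \<longleftrightarrow> inner ys"
proof -
  have "max_zero_run (ys @ [0]) i j \<and> j < length (ys @ [0]) \<longleftrightarrow>
        max_zero_run ys i j \<and> j < length ys" for i j
  proof (cases "j < length ys")
    case True then show ?thesis using mzr_app_lt[OF True, of "[0]"] by simp
  next
    case False
    have "\<not> max_zero_run (ys @ [0]) i j" if "j < length ys + 1"
      using that False unfolding max_zero_run_def by (auto simp: nth_append)
    then show ?thesis using False by auto
  qed
  then show ?thesis unfolding inner_def by simp
qed

lemma inner1: "inner (ys @ [1]) \<longleftrightarrow> inner ys \<and> fin ys"
proof -
  have A: "max_zero_run (ys @ [1]) i j \<and> j < length (ys @ [1]) \<longleftrightarrow>
        max_zero_run ys i j \<and> j < length ys \<or> (j = length ys \<and> max_zero_run ys i j)" for i j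
  proof (cases "j < length ys")
    case True then show ?thesis using mzr_app_lt[OF True, of "[1]"] by simp
  next
    case False
    show ?thesis
    proof (cases "j = length ys")
      case True then show ?thesis using mzr_app_eq[of "[1]" ys i] by simp
    next
      case F2: False
      then show ?thesis using False by auto
    qed
  qed
  show ?thesis unfolding inner_def fin_def
    apply (simp only: A)
    by blast
qed

lemma fin1: "fin (ys @ [1])"
proof -
  have "\<not> max_zero_run (ys @ [1]) i (length (ys @ [1]))" for i
  proof
    assume "max_zero_run (ys @ [1]) i (length (ys @ [1]))"
    then have "i \<le> length ys" "\<forall>k. i \<le> k \<and> k < Suc (length ys) \<longrightarrow> (ys @ [1]) ! k = 0"
      unfolding max_zero_run_def by auto
    then have "(ys @ [1]) ! length ys = 0" by blast
    then show False by simp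
  qed
  then show ?thesis unfolding fin_def by blast
qed

lemma mzr_end0:
  "max_zero_run (ys @ [0]) i (Suc (length ys)) \<longleftrightarrow>
    (i = length ys \<and> (length ys = 0 \<or> ys ! (length ys - 1) \<noteq> 0)) \<or>
    (i < length ys \<and> max_zero_run ys i (length ys))"
  unfolding max_zero_run_def
  apply (auto simp: nth_append)
  apply (metis less_Suc_eq not_less_eq)
  apply (cases ys; simp)
  done


lemma mzr_end0z:
  assumes "ys \<noteq> []" "last ys = 0"
  shows "max_zero_run (ys @ [0]) i (Suc (length ys)) \<longleftrightarrow>
    (i < length ys \<and> max_zero_run ys i (length ys))"
proof -
  have "ys ! (length ys - 1) = 0" using assms by (simp add: last_conv_nth)
  then show ?thesis using mzr_end0[of ys i] assms by auto
qed

lemma fin000: "fin (xs @ [0,0,0]) \<longleftrightarrow> fin xs"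
proof -
  let ?n = "length xs"
  have A: "max_zero_run (xs @ [0,0,0]) i (?n + 3) \<longleftrightarrow>
     (i = ?n \<and> (?n = 0 \<or> xs ! (?n - 1) \<noteq> 0)) \<or> (i < ?n \<and> max_zero_run xs i ?n)" for i
  proof -
    have e: "xs @ [0,0,0] = ((xs @ [0]) @ [0]) @ [0]" by simp
    have l: "?n + 3 = Suc (length ((xs @ [0]) @ [0]))" by simp
    have "max_zero_run (xs @ [0,0,0]) i (?n + 3) \<longleftrightarrow>
       i < Suc (Suc ?n) \<and> max_zero_run ((xs @ [0]) @ [0]) i (Suc (Suc ?n))"
      unfolding e l by (subst mzr_end0z) auto
    also have "\<dots> \<longleftrightarrow> i < Suc ?n \<and> max_zero_run (xs @ [0]) i (Suc ?n)"
      using mzr_end0z[of "xs @ [0]" i] by auto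
    also have "\<dots> \<longleftrightarrow> (i = ?n \<and> (?n = 0 \<or> xs ! (?n - 1) \<noteq> 0)) \<or> (i < ?n \<and> max_zero_run xs i ?n)"
      using mzr_end0[of xs i] by auto
    finally show ?thesis .
  qed
  have B: "max_zero_run xs i ?n \<Longrightarrow> i < ?n" for i unfolding max_zero_run_def by simp
  have C: "(?n + 3 - i) mod 3 = (?n - i) mod 3" if "i \<le> ?n" for i
  proof -
    have e: "?n + 3 - i = (?n - i) + 3" using that by arith
    show ?thesis by (simp only: e mod_add_self2)
  qed
  have L0: "length (xs @ [0,0,0]) = ?n + 3" by simp
  have "fin (xs @ [0,0,0]) \<longleftrightarrow> (\<forall>i. max_zero_run (xs @ [0,0,0]) i (?n + 3) \<longrightarrow> (?n + 3 - i) mod 3 \<noteq> 1)"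
    unfolding fin_def L0 by (rule refl)
  also have "\<dots> \<longleftrightarrow> fin xs"
    unfolding A fin_def using B C by (auto simp: less_imp_le)
  finally show ?thesis .
qed


lemma fin100: "fin (xs @ [1,0,0])"
proof -
  let ?n = "length xs"
  have "max_zero_run (xs @ [1,0,0]) i (?n + 3) \<Longrightarrow> i = Suc ?n" for i
  proof -
    assume a: "max_zero_run (xs @ [1,0,0]) i (?n + 3)"
    have r: "i < ?n + 3" "\<forall>k. i \<le> k \<and> k < ?n + 3 \<longrightarrow> (xs @ [1,0,0]) ! k = 0"
      "i = 0 \<or> (xs @ [1,0,0]) ! (i - 1) \<noteq> 0"
      using a unfolding max_zero_run_def by auto
    have n1: "(xs @ [1,0,0]) ! ?n = 1" by (simp add: nth_append)
    have n2: "(xs @ [1,0,0]) ! Suc ?n = 0" by (simp add: nth_append)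
    have "\<not> i \<le> ?n" using r(2) n1 by force
    moreover have "i \<noteq> Suc (Suc ?n)" using r(3) n2 by auto
    ultimately show ?thesis using r(1) by linarith
  qed
  note H = this
  have L: "length (xs @ [1,0,0]) = ?n + 3" by simp
  show ?thesis unfolding fin_def L
  proof (intro allI impI)
    fix i assume "max_zero_run (xs @ [1,0,0]) i (?n + 3)"
    then have "i = Suc ?n" by (rule H)
    then show "(?n + 3 - i) mod 3 \<noteq> 1" by simp
  qed
qed

lemma not_fin10: "\<not> fin (xs @ [1,0])"
proof -
  have e: "xs @ [1,0] = (xs @ [1]) @ [0]" by simp
  have "(xs @ [1]) ! (length (xs @ [1]) - 1) \<noteq> 0" by (simp add: nth_append)
  then have m: "max_zero_run ((xs @ [1]) @ [0]) (length (xs @ [1])) (Suc (length (xs @ [1])))"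
    using mzr_end0[of "xs @ [1]" "length (xs @ [1])"] by blast
  have L: "length (xs @ [1,0]) = Suc (length (xs @ [1]))" by simp
  have m2: "max_zero_run (xs @ [1,0]) (length (xs @ [1])) (length (xs @ [1,0]))"
    using m unfolding e[symmetric] L[symmetric] .
  show ?thesis
  proof
    assume f: "fin (xs @ [1,0])"
    have "(length (xs @ [1,0]) - length (xs @ [1])) mod 3 \<noteq> 1"
      using f m2 unfolding fin_def by blast
    then show False by simp
  qed
qed

lemma good1: "good (xs @ [1]) \<longleftrightarrow> good xs"
  using inner1[of xs] fin1[of xs] by (simp only: good_split simp_thms)

lemma good000: "good (xs @ [0,0,0]) \<longleftrightarrow> good xs"
proof -
  have e: "xs @ [0,0,0] = ((xs @ [0]) @ [0]) @ [0]" by simp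
  have "inner (xs @ [0,0,0]) = inner ((xs @ [0]) @ [0])" unfolding e by (rule inner0)
  also have "\<dots> = inner (xs @ [0])" by (rule inner0)
  also have "\<dots> = inner xs" by (rule inner0)
  finally have "inner (xs @ [0,0,0]) = inner xs" .
  then have "inner (xs @ [0,0,0]) \<and> fin (xs @ [0,0,0]) \<longleftrightarrow> inner xs \<and> fin xs"
    using fin000[of xs] by (rule arg_cong2[where f="(\<and>)"])
  then show ?thesis by (simp only: good_split)
qed

lemma good100: "good (xs @ [1,0,0]) \<longleftrightarrow> good xs"
proof -
  have e: "xs @ [1,0,0] = ((xs @ [1]) @ [0]) @ [0]" by simp
  have "inner (xs @ [1,0,0]) = inner ((xs @ [1]) @ [0])" unfolding e by (rule inner0)
  also have "\<dots> = inner (xs @ [1])" by (rule inner0)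
  finally have "inner (xs @ [1,0,0]) = inner (xs @ [1])" .
  then have "inner (xs @ [1,0,0]) \<and> fin (xs @ [1,0,0]) \<longleftrightarrow> inner xs \<and> fin xs"
    using fin100[of xs] inner1[of xs] by (simp only: simp_thms)
  then show ?thesis by (simp only: good_split)
qed

lemma not_good10: "\<not> good (xs @ [1,0])"
  using not_fin10[of xs] by (simp only: good_split simp_thms)

lemma S_good: "S n = {xs. length xs = n \<and> set xs \<subseteq> {0,1} \<and> good xs}"
  unfolding S_def good_def by simp

lemma finite_S: "finite (S n)"
proof -
  have "S n \<subseteq> {xs. set xs \<subseteq> {0,1} \<and> length xs = n}" unfolding S_def by auto
  moreover have "finite {xs. set xs \<subseteq> {0::nat,1} \<and> length xs = n}"
    by (rule finite_lists_length_eq) simp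
  ultimately show ?thesis by (rule finite_subset)
qed

lemma S_decomp:
  assumes "n \<ge> 3"
  shows "S n = (\<lambda>ys. ys @ [1]) ` S (n - 1) \<union> (\<lambda>ys. ys @ [0,0,0]) ` S (n - 3)
              \<union> (\<lambda>ys. ys @ [1,0,0]) ` S (n - 3)"
proof
  show "S n \<subseteq> (\<lambda>ys. ys @ [1]) ` S (n - 1) \<union> (\<lambda>ys. ys @ [0,0,0]) ` S (n - 3)
              \<union> (\<lambda>ys. ys @ [1,0,0]) ` S (n - 3)"
  proof
    fix xs assume xs: "xs \<in> S n"
    then have len: "length xs = n" and st: "set xs \<subseteq> {0,1}" and g: "good xs"
      unfolding S_good by auto
    obtain ys a b d where xsd: "xs = ys @ [a, b, d]"
    proof -
      obtain z1 d where "xs = z1 @ [d]" using len assms by (cases xs rule: rev_cases) auto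
      moreover obtain z2 b where "z1 = z2 @ [b]" using len assms \<open>xs = z1 @ [d]\<close>
        by (cases z1 rule: rev_cases) auto
      moreover obtain ys a where "z2 = ys @ [a]" using len assms \<open>xs = z1 @ [d]\<close> \<open>z1 = z2 @ [b]\<close>
        by (cases z2 rule: rev_cases) auto
      ultimately show ?thesis using that by simp
    qed
    have lys: "length ys = n - 3" using len xsd by simp
    have sys: "set ys \<subseteq> {0,1}" and abd: "a \<in> {0,1}" "b \<in> {0,1}" "d \<in> {0,1}"
      using st xsd by auto
    show "xs \<in> (\<lambda>ys. ys @ [1]) ` S (n - 1) \<union> (\<lambda>ys. ys @ [0,0,0]) ` S (n - 3)
              \<union> (\<lambda>ys. ys @ [1,0,0]) ` S (n - 3)"
    proof (cases "d = 1")
      case True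
      then have "xs = (ys @ [a,b]) @ [1]" using xsd by simp
      moreover have "ys @ [a,b] \<in> S (n - 1)"
        using g good1[of "ys @ [a,b]"] calculation lys sys abd assms unfolding S_good by auto
      ultimately show ?thesis by blast
    next
      case False
      then have d0: "d = 0" using abd by auto
      show ?thesis
      proof (cases "b = 1")
        case True
        then have "xs = (ys @ [a]) @ [1,0]" using xsd d0 by simp
        then show ?thesis using g not_good10 by metis
      next
        case False
        then have b0: "b = 0" using abd by auto
        show ?thesis
        proof (cases "a = 1")
          case True
          then have "xs = ys @ [1,0,0]" using xsd d0 b0 by simp
          moreover have "ys \<in> S (n - 3)" using g good100 calculation lys sys unfolding S_good by auto
          ultimately show ?thesis by blast
        next
          case False
          then have "xs = ys @ [0,0,0]" using xsd d0 b0 abd by simp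
          moreover have "ys \<in> S (n - 3)" using g good000 calculation lys sys unfolding S_good by auto
          ultimately show ?thesis by blast
        qed
      qed
    qed
  qed
next
  show "(\<lambda>ys. ys @ [1]) ` S (n - 1) \<union> (\<lambda>ys. ys @ [0,0,0]) ` S (n - 3)
              \<union> (\<lambda>ys. ys @ [1,0,0]) ` S (n - 3) \<subseteq> S n"
    using assms good1 good000 good100 by (auto simp: S_good)
qed

lemma c_rec:
  assumes "n \<ge> 3"
  shows "c n = c (n - 1) + 2 * c (n - 3)"
proof -
  let ?A = "(\<lambda>ys. ys @ [1]) ` S (n - 1)"
  let ?B = "(\<lambda>ys. ys @ [0,0,0::nat]) ` S (n - 3)"
  let ?C = "(\<lambda>ys. ys @ [1,0,0::nat]) ` S (n - 3)"
  have fA: "finite ?A" and fB: "finite ?B" and fC: "finite ?C" using finite_S by auto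
  have cA: "card ?A = c (n - 1)" unfolding c_def by (rule card_image) (auto simp: inj_on_def)
  have cB: "card ?B = c (n - 3)" unfolding c_def by (rule card_image) (auto simp: inj_on_def)
  have cC: "card ?C = c (n - 3)" unfolding c_def by (rule card_image) (auto simp: inj_on_def)
  have dBC: "?B \<inter> ?C = {}"
  proof -
    have "ys @ [0,0,0] \<noteq> zs @ [1,0,0::nat]" if "length ys = length zs" for ys zs :: "nat list"
      using that by auto
    then show ?thesis unfolding S_def by fastforce
  qed
  have dA: "?A \<inter> (?B \<union> ?C) = {}" by auto
  have "c n = card (?A \<union> (?B \<union> ?C))" unfolding c_def using S_decomp[OF assms]
    by (simp add: Un_assoc)
  also have "\<dots> = card ?A + (card ?B + card ?C)"
    using card_Un_disjoint[OF fA _ dA] card_Un_disjoint[OF fB fC dBC] fB fC by simp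
  finally show ?thesis using cA cB cC by simp
qed

lemma good_nil: "good []" unfolding good_def max_zero_run_def by simp

lemma not_good0: "\<not> good [0]"
proof -
  have "max_zero_run [0] 0 1" unfolding max_zero_run_def by auto
  then show ?thesis unfolding good_def by fastforce
qed

lemma good00: "good [0,0]"
proof -
  have "max_zero_run [0,0] i j \<Longrightarrow> i = 0 \<and> j = 2" for i j
  proof -
    assume a: "max_zero_run [0,0] i j"
    then have "i < j" "j \<le> 2" "i = 0 \<or> [0::nat,0] ! (i - 1) \<noteq> 0" "j = 2 \<or> [0::nat,0] ! j \<noteq> 0"
      unfolding max_zero_run_def by auto
    then show ?thesis by (auto simp: less_Suc_eq nth_Cons' numeral_2_eq_2 le_Suc_eq)
  qed
  then show ?thesis unfolding good_def by fastforce
qed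

lemma S0: "S 0 = {[]}" unfolding S_good using good_nil by auto

lemma S1: "S 1 = {[1]}"
proof -
  have "xs \<in> S 1 \<longleftrightarrow> xs = [1]" for xs
  proof
    assume "xs \<in> S 1"
    then obtain a where "xs = [a]" "a \<in> {0,1}" "good [a]" unfolding S_good
      by (cases xs) auto
    then show "xs = [1]" using not_good0 by auto
  next
    assume "xs = [1]"
    then show "xs \<in> S 1" unfolding S_good using good1[of "[]"] good_nil by simp
  qed
  then show ?thesis by blast
qed

lemma S2: "S 2 = {[0,0],[1,1]}"
proof -
  have "xs \<in> S 2 \<longleftrightarrow> xs = [0,0] \<or> xs = [1,1]" for xs
  proof
    assume "xs \<in> S 2"
    then obtain a b where xs: "xs = [a,b]" "a \<in> {0,1}" "b \<in> {0,1}" "good [a,b]" unfolding S_good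
      by (auto simp: length_Suc_conv numeral_2_eq_2)
    have g1: "good [a,1] \<longleftrightarrow> good [a]" using good1[of "[a]"] by simp
    have g2: "good [a] \<longleftrightarrow> good ([] @ [a])" by simp
    have "\<not> good [1,0]" using not_good10[of "[]"] by simp
    then show "xs = [0,0] \<or> xs = [1,1]" using xs g1 good1[of "[]"] not_good0 by auto
  next
    assume "xs = [0,0] \<or> xs = [1,1]"
    moreover have "good [1,1]" using good1[of "[1]"] good1[of "[]"] good_nil by simp
    ultimately show "xs \<in> S 2" unfolding S_good using good00 by auto
  qed
  then show ?thesis by blast
qed

theorem theorem4:
  shows "(\<forall>n\<ge>4. c n = c (n - 1) + 2 * c (n - 3)) \<and> c 1 = 1 \<and> c 2 = 2 \<and> c 3 = 4"
proof -
  have c0: "c 0 = 1" unfolding c_def S0 by simp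
  have c1: "c 1 = 1" unfolding c_def S1 by simp
  have c2: "c 2 = 2" unfolding c_def S2 by simp
  have c3: "c 3 = 4" using c_rec[of 3] c0 c2 by simp
  show ?thesis using c_rec c1 c2 c3 by simp
qed

end
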